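(* Let $H$ be a hypergraph on $V=[n]$ and let $A,B$ be hyperedges of $H$. Then $A$ and $B$ are $r$-orthogonal if and only if $\mathrm{cl}_r(\{A,B\})=\mathrm{cl}_r(\{A\})\cup\mathrm{cl}_r(\{B\})$.
   Context: Hypergraphs on $V$ are identified with their hyperedge sets; $\{A\}$, $\{A,B\}$ denote hypergraphs on $V$ with the indicated hyperedges. $\mathcal K_r(n)$ is the class of hypergraphs $\mathcal E$ on $V$ satisfying: (R0) every $X\subseteq V$ with $|X|\le r$ is in $\mathcal E$; (R1) $A\in\mathcal E\Rightarrow V\setminus A\in\mathcal E$; (R2) $A,B\in\mathcal E$ and $|A\cap B|\ge r\Rightarrow A\cup B\in\mathcal E$. $\mathcal K^0_r(n)$ is the class satisfying (R0) and (R1) only. $\mathrm{cl}_r(H)$ (resp. $\mathrm{cl}^0_r(H)$) is the intersection of all hypergraphs in $\mathcal K_r(n)$ (resp. $\mathcal K^0_r(n)$) containing $H$. $A,B$ are $r$-orthogonal if $\mathrm{cl}_r(\{A,B\})=\mathrm{cl}^0_r(\{A,B\})$. *)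

theory Defs
  imports Main
begin

definition ground :: "nat \<Rightarrow> nat set" where
  "ground n = {1..n}"

definition hypergraph :: "nat \<Rightarrow> nat set set \<Rightarrow> bool" where
  "hypergraph n H \<longleftrightarrow> H \<subseteq> Pow (ground n)"

definition K0 :: "nat \<Rightarrow> nat \<Rightarrow> nat set set set" where
  "K0 r n = {E. hypergraph n E
      \<and> (\<forall>X. X \<subseteq> ground n \<and> card X \<le> r \<longrightarrow> X \<in> E)
      \<and> (\<forall>A\<in>E. ground n - A \<in> E)}"

definition K :: "nat \<Rightarrow> nat \<Rightarrow> nat set set set" where
  "K r n = {E. E \<in> K0 r n
      \<and> (\<forall>A\<in>E. \<forall>B\<in>E. card (A \<inter> B) \<ge> r \<longrightarrow> A \<union> B \<in> E)}"

definition cl :: "nat \<Rightarrow> nat \<Rightarrow> nat set set \<Rightarrow> nat set set" where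
  "cl r n H = \<Inter> {E \<in> K r n. H \<subseteq> E}"

definition cl0 :: "nat \<Rightarrow> nat \<Rightarrow> nat set set \<Rightarrow> nat set set" where
  "cl0 r n H = \<Inter> {E \<in> K0 r n. H \<subseteq> E}"

definition orthogonal :: "nat \<Rightarrow> nat \<Rightarrow> nat set \<Rightarrow> nat set \<Rightarrow> bool" where
  "orthogonal r n A B \<longleftrightarrow> cl r n {A, B} = cl0 r n {A, B}"

end

theory Submission
  imports Defs
begin

definition E0 :: "nat \<Rightarrow> nat \<Rightarrow> nat set set \<Rightarrow> nat set set" where
  "E0 r n H = {X. X \<subseteq> ground n \<and> (card X \<le> r \<or> card (ground n - X) \<le> r \<or> X \<in> H \<or> ground n - X \<in> H)}"

lemma fin_ground: "finite (ground n)" by (simp add: ground_def)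

lemma E0_K0: "H \<subseteq> Pow (ground n) \<Longrightarrow> E0 r n H \<in> K0 r n"
  unfolding K0_def hypergraph_def E0_def
  by (auto simp: double_diff)

lemma E0_min: assumes "E \<in> K0 r n" "H \<subseteq> E" shows "E0 r n H \<subseteq> E"
proof
  fix X assume "X \<in> E0 r n H"
  hence X: "X \<subseteq> ground n" and c: "card X \<le> r \<or> card (ground n - X) \<le> r \<or> X \<in> H \<or> ground n - X \<in> H"
    by (auto simp: E0_def)
  have R0: "\<And>Y. Y \<subseteq> ground n \<Longrightarrow> card Y \<le> r \<Longrightarrow> Y \<in> E"
   and R1: "\<And>Y. Y \<in> E \<Longrightarrow> ground n - Y \<in> E" using assms(1) by (auto simp: K0_def)
  have eq: "ground n - (ground n - X) = X" using X by auto
  from c show "X \<in> E"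
  proof (elim disjE)
    assume "card (ground n - X) \<le> r"
    then have "ground n - X \<in> E" using R0 by auto
    then show ?thesis using R1 eq by metis
  next
    assume "ground n - X \<in> H"
    then have "ground n - X \<in> E" using assms(2) by auto
    then show ?thesis using R1 eq by metis
  qed (use R0 X assms(2) in auto)
qed

lemma cl0_E0: assumes "H \<subseteq> Pow (ground n)" shows "cl0 r n H = E0 r n H"
proof
  have "H \<subseteq> E0 r n H" using assms by (auto simp: E0_def)
  then show "cl0 r n H \<subseteq> E0 r n H" unfolding cl0_def using E0_K0[OF assms]
    by (intro Inter_lower) auto
  show "E0 r n H \<subseteq> cl0 r n H" unfolding cl0_def using E0_min by blast
qed

lemma cl0_sub_cl: "cl0 r n H \<subseteq> cl r n H"
  unfolding cl0_def cl_def K_def by blast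

lemma cl_mono: "H \<subseteq> H' \<Longrightarrow> cl r n H \<subseteq> cl r n H'"
  unfolding cl_def by blast

lemma E0_single_K:
  assumes r: "1 \<le> r" and A: "A \<subseteq> ground n"
  shows "E0 r n {A} \<in> K r n"
proof -
  let ?g = "ground n"
  have fin: "\<And>Y. Y \<subseteq> ?g \<Longrightarrow> finite Y" using fin_ground finite_subset by blast
  have R2: "X \<union> Y \<in> E0 r n {A}" if X: "X \<in> E0 r n {A}" and Y: "Y \<in> E0 r n {A}"
      and c: "card (X \<inter> Y) \<ge> r" for X Y
  proof -
    have Xg: "X \<subseteq> ?g" and Yg: "Y \<subseteq> ?g" using X Y by (auto simp: E0_def)
    have co: "X \<union> Y \<in> E0 r n {A}" if "card (?g - Z) \<le> r" "Z = X \<or> Z = Y" for Z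
    proof -
      have "card (?g - (X \<union> Y)) \<le> card (?g - Z)"
        using that(2) by (intro card_mono) (auto simp: fin_ground)
      then show ?thesis using that Xg Yg by (auto simp: E0_def)
    qed
    have sm: "X \<union> Y \<in> E0 r n {A}" if "card Z \<le> r" "Z = X \<and> W = Y \<or> Z = Y \<and> W = X" for Z W
    proof -
      have "Z \<inter> W \<subseteq> Z" by auto
      moreover have "finite Z" using that(2) fin Xg Yg by auto
      moreover have "card (Z \<inter> W) \<ge> card Z" using c that by (auto simp: Int_commute)
      ultimately have "Z \<inter> W = Z" by (meson card_seteq)
      then have "X \<union> Y = W" using that(2) by auto
      then show ?thesis using that(2) X Y by auto
    qed
    show ?thesis
    proof (cases "card X \<le> r \<or> card Y \<le> r \<or> card (?g - X) \<le> r \<or> card (?g - Y) \<le> r")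
      case True then show ?thesis using co sm by blast
    next
      case False
      then have "X \<in> {A, ?g - A}" "Y \<in> {A, ?g - A}" using X Y A by (auto simp: E0_def)
      moreover have "X \<noteq> Y \<Longrightarrow> X \<inter> Y = {}" using calculation by auto
      ultimately show ?thesis using c r X by (cases "X = Y") auto
    qed
  qed
  show ?thesis using E0_K0[of "{A}" n r] A R2 unfolding K_def by auto
qed

lemma cl_single: assumes "1 \<le> r" "A \<subseteq> ground n" shows "cl r n {A} = E0 r n {A}"
proof
  have "{A} \<subseteq> E0 r n {A}" using assms by (auto simp: E0_def)
  then show "cl r n {A} \<subseteq> E0 r n {A}" unfolding cl_def using E0_single_K[OF assms]
    by (intro Inter_lower) auto
  show "E0 r n {A} \<subseteq> cl r n {A}" using cl0_sub_cl[of r n "{A}"] cl0_E0[of "{A}" n r] assms(2) by auto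
qed

theorem mainTheorem15:
  fixes n r :: nat and H :: "nat set set" and A B :: "nat set"
  assumes "1 \<le> r"
    and "hypergraph n H"
    and "A \<in> H" and "B \<in> H"
  shows "orthogonal r n A B \<longleftrightarrow> cl r n {A, B} = cl r n {A} \<union> cl r n {B}"
proof -
  have A: "A \<subseteq> ground n" and B: "B \<subseteq> ground n" using assms unfolding hypergraph_def by auto
  have u: "E0 r n {A, B} = E0 r n {A} \<union> E0 r n {B}" unfolding E0_def by auto
  have c0: "cl0 r n {A, B} = cl r n {A} \<union> cl r n {B}"
    using cl0_E0[of "{A,B}" n r] A B u cl_single[OF assms(1) A] cl_single[OF assms(1) B] by auto
  show ?thesis unfolding orthogonal_def c0 ..
qed

end
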